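(* Let $\operatorname{rk}L=2$ with basis $e_1,e_2$, dual basis $f_1,f_2$, $x_i=X^{f_i}$, $k=\omega(e_1,e_2)\ne0$, and let $m_1,m_2\ge0$. Then: (1) $\mathcal U(\{m_1\times e_2,\ m_2\times(-e_2)\})$ consists exactly of the Laurent polynomials $W=\sum_l c_l(x_1)x_2^l$, $c_l\in\mathcal Q[x_1^{\pm1}]$, such that $c_l$ is divisible by $(1+x_1^k)^{-m_1l}$ for $l\le0$ and by $(1+x_1^k)^{m_2l}$ for $l\ge0$; (2) $\mathcal U(\{m_1\times e_2,\ m_2\times(-e_2)\})=\mathcal Q\bigl[x_1^{\pm1},\ x_2(1+x_1^k)^{m_2},\ (1+x_1^k)^{m_1}/x_2\bigr]$.
   Context: For a lattice $L$ with skew-symmetric integral bilinear form $\omega$: $L^*=\mathrm{Hom}(L,\mathbb Z)$, $(\cdot,\cdot)$ the canonical pairing; $\mathcal Q=\mathbb Q(e^{2\pi i\mathbb Q})$ is $\mathbb Q$ with all roots of unity adjoined; $\mathcal Q[L^*]$ is the group algebra of $L^*$ with monomials $X^m$, and $\mathbb K_L$ its fraction field. For $v\in L$, $\mu_v^*$ is the $\mathcal Q$-algebra automorphism of $\mathbb K_L$ with $\mu_v^*(X^m)=X^m(1+X^{\omega(\cdot,v)})^{-(m,v)}$, where $\omega(\cdot,v)\in L^*$ is $w\mapsto\omega(w,v)$; e.g. $\mu_{e_2}^*(x_1,x_2)=(x_1,x_2/(1+x_1^k))$ and $\mu_{-e_2}^*(x_1,x_2)=(x_1,x_2(1+x_1^{-k}))$.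 An exchange collection is a finite tuple of vectors with multiplicity function $m_V$; $\{m_1\times u_1,m_2\times u_2\}$ denotes the collection with $u_j$ of multiplicity $m_j$. The upper bound is $\mathcal U(V)=\mathcal Q[L^*]\cap\bigcap_{v\in L}(\mu_v^* )^{m_V(v)}(\mathcal Q[L^*])\subset\mathbb K_L$. $\mathcal Q[g_1,\dots]$ denotes the $\mathcal Q$-subalgebra generated by the $g_i$. *)

theory Defs
  imports Complex_Main "HOL-Computational_Algebra.Polynomial" "HOL-Computational_Algebra.Fraction_Field"
begin

text \<open>The coefficient field: Q with all roots of unity adjoined, as the smallest
  subfield of the complex numbers containing all roots of unity.\<close>
definition Qcyc :: "complex set" where
  "Qcyc = \<Inter> {F. (\<forall>z. (\<exists>n>0. z ^ n = 1) \<longrightarrow> z \<in> F)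
                 \<and> (\<forall>x\<in>F. \<forall>y\<in>F. x + y \<in> F \<and> x * y \<in> F)
                 \<and> (\<forall>x\<in>F. - x \<in> F)
                 \<and> (\<forall>x\<in>F. x \<noteq> 0 \<longrightarrow> inverse x \<in> F)}"

text \<open>L = Z^2 with basis e1=(1,0), e2=(0,1); L* = Z^2 with dual basis f1, f2.
  The ambient field: rational functions in x1, x2 (fraction field of C[x1][x2]);
  it contains K_L (coefficients in Qcyc) and Q[L*].\<close>
type_synonym K = "complex poly poly fract"

definition cK :: "complex \<Rightarrow> K" where "cK c = Fract [:[:c:]:] 1"
definition x1 :: K where "x1 = Fract [:[:0, 1:]:] 1"
definition x2 :: K where "x2 = Fract [:0, 1:] 1"

text \<open>Monomial X^m for m = a f1 + b f2.\<close>
definition monoX :: "int \<times> int \<Rightarrow> K" where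
  "monoX m = x1 powi (fst m) * x2 powi (snd m)"

definition LaurentPolys :: "K set" where
  "LaurentPolys = {(\<Sum>m\<in>S. cK (c m) * monoX m) | S c. finite S \<and> (\<forall>m\<in>S. c m \<in> Qcyc)}"

definition LaurentPolys1 :: "K set" where
  "LaurentPolys1 = {(\<Sum>a\<in>S. cK (c a) * x1 powi a) | S c. finite S \<and> (\<forall>a\<in>S. c a \<in> Qcyc)}"

definition omega :: "int \<Rightarrow> int \<times> int \<Rightarrow> int \<times> int \<Rightarrow> int" where
  "omega k u v = k * (fst u * snd v - snd u * fst v)"

definition subst2 :: "K \<Rightarrow> K \<Rightarrow> complex poly poly \<Rightarrow> K" where
  "subst2 y1 y2 p = poly (map_poly (\<lambda>q. poly (map_poly cK q) y1) p) y2"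

text \<open>mu_v^*: X^m \<mapsto> X^m (1 + X^{omega(.,v)})^{-(m,v)}, extended to the fraction field.\<close>
definition mu :: "int \<Rightarrow> int \<times> int \<Rightarrow> K \<Rightarrow> K" where
  "mu k v f =
    (let w = (omega k (1,0) v, omega k (0,1) v);
         y1 = x1 * (1 + monoX w) powi (- fst v);
         y2 = x2 * (1 + monoX w) powi (- snd v)
     in SOME r. \<exists>p q. q \<noteq> 0 \<and> f = Fract p q \<and> r = subst2 y1 y2 p / subst2 y1 y2 q)"

text \<open>Upper bound of an exchange collection given by its multiplicity function mV.\<close>
definition upper_bound :: "int \<Rightarrow> (int \<times> int \<Rightarrow> nat) \<Rightarrow> K set" where
  "upper_bound k mV = LaurentPolys \<inter> (\<Inter>v. ((mu k v) ^^ (mV v)) ` LaurentPolys)"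

definition coll2 :: "nat \<Rightarrow> nat \<Rightarrow> int \<times> int \<Rightarrow> nat" where
  "coll2 m1 m2 v = (if v = (0, 1) then m1 else if v = (0, -1) then m2 else 0)"

inductive_set alg_gen :: "K set \<Rightarrow> K set" for G where
  const: "c \<in> Qcyc \<Longrightarrow> cK c \<in> alg_gen G"
| gen: "g \<in> G \<Longrightarrow> g \<in> alg_gen G"
| add: "a \<in> alg_gen G \<Longrightarrow> b \<in> alg_gen G \<Longrightarrow> a + b \<in> alg_gen G"
| mult: "a \<in> alg_gen G \<Longrightarrow> b \<in> alg_gen G \<Longrightarrow> a * b \<in> alg_gen G"

end

theory Submission
  imports Defs
begin


definition E :: "complex poly poly \<Rightarrow> K" where "E p = Fract p 1"

lemma E_add: "E (p+q) = E p + E q" by (simp add: E_def)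
lemma E_mult: "E (p*q) = E p * E q" by (simp add: E_def)
lemma E_0: "E 0 = 0" by (simp add: E_def Zero_fract_def)
lemma E_1: "E 1 = 1" by (simp add: E_def One_fract_def)
lemma E_eq: "E p = E q \<longleftrightarrow> p = q" by (simp add: E_def eq_fract)
lemma E_eq0: "E p = 0 \<longleftrightarrow> p = 0" using E_eq[of p 0] E_0 by simp
lemma E_pow: "E (p^n) = E p ^ n" by (induction n) (simp_all add: E_1 E_mult)

definition ishom :: "('a::comm_ring_1 \<Rightarrow> 'b::comm_ring_1) \<Rightarrow> bool" where
 "ishom g \<longleftrightarrow> (\<forall>a b. g (a+b) = g a + g b) \<and> (\<forall>a b. g(a*b) = g a * g b) \<and> g 1 = 1"

lemma ishom_add: "ishom g \<Longrightarrow> g (a+b) = g a + g b" by (simp add: ishom_def)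
lemma ishom_mult: "ishom g \<Longrightarrow> g (a*b) = g a * g b" by (simp add: ishom_def)
lemma ishom_1: "ishom g \<Longrightarrow> g 1 = 1" by (simp add: ishom_def)
lemma ishom_0: "ishom g \<Longrightarrow> g 0 = 0"
  using ishom_add[of g 0 0] by simp
lemma ishom_uminus: "ishom g \<Longrightarrow> g (-a) = - g a"
  using ishom_add[of g "-a" a] ishom_0[of g] by (simp add: eq_neg_iff_add_eq_0)
lemma ishom_diff: "ishom g \<Longrightarrow> g (a-b) = g a - g b"
  using ishom_add[of g a "-b"] ishom_uminus[of g b] by simp
lemma ishom_pow: "ishom g \<Longrightarrow> g (a^n) = g a ^ n"
  by (induction n) (simp_all add: ishom_1 ishom_mult)
lemma ishom_sum: "ishom g \<Longrightarrow> g (sum f S) = (\<Sum>x\<in>S. g (f x))"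
  by (induction S rule: infinite_finite_induct) (simp_all add: ishom_0 ishom_add)

lemma ev_smult:
  assumes "ishom g"
  shows "poly (map_poly g (smult a q)) y = g a * poly (map_poly g q) y"
  by (induction q) (simp_all add: map_poly_pCons ishom_0[OF assms] ishom_mult[OF assms] algebra_simps)

lemma ev_hom:
  assumes "ishom g"
  shows "ishom (\<lambda>p. poly (map_poly g p) y)"
proof -
  have z: "g 0 = 0" by (rule ishom_0[OF assms])
  have add: "poly (map_poly g (p+q)) y = poly (map_poly g p) y + poly (map_poly g q) y" for p q
    by (induction p q rule: poly_induct2) (simp_all add: map_poly_pCons z ishom_add[OF assms] algebra_simps)
  have mult: "poly (map_poly g (p*q)) y = poly (map_poly g p) y * poly (map_poly g q) y" for p q
  proof (induction p)
    case 0 then show ?case by simp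
  next
    case (pCons a p)
    have "poly (map_poly g (pCons a p * q)) y = poly (map_poly g (smult a q)) y + poly (map_poly g (pCons 0 (p * q))) y"
      by (simp only: mult_pCons_left add)
    also have "\<dots> = g a * poly (map_poly g q) y + y * (poly (map_poly g p) y * poly (map_poly g q) y)"
      using pCons by (simp add: ev_smult[OF assms] map_poly_pCons z)
    finally show ?case by (simp add: map_poly_pCons z algebra_simps)
  qed
  show ?thesis unfolding ishom_def using add mult by (simp add: ishom_1[OF assms])
qed


lemma E_hom_aux: "ishom E" by (simp add: ishom_def E_add E_mult E_1)

lemma qc_root: "z ^ n = 1 \<Longrightarrow> n > 0 \<Longrightarrow> z \<in> Qcyc"
  unfolding Qcyc_def by blast
lemma qc_add: "x \<in> Qcyc \<Longrightarrow> y \<in> Qcyc \<Longrightarrow> x + y \<in> Qcyc"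
  unfolding Qcyc_def by blast
lemma qc_mult: "x \<in> Qcyc \<Longrightarrow> y \<in> Qcyc \<Longrightarrow> x * y \<in> Qcyc"
  unfolding Qcyc_def by blast
lemma qc_uminus: "x \<in> Qcyc \<Longrightarrow> - x \<in> Qcyc"
  unfolding Qcyc_def by blast
lemma qc_1: "1 \<in> Qcyc" by (rule qc_root[of 1 1]) auto
lemma qc_0: "0 \<in> Qcyc" using qc_add[OF qc_1 qc_uminus[OF qc_1]] by simp

lemma cK_E: "cK c = E [:[:c:]:]" by (simp add: cK_def E_def)
lemma cK_hom: "ishom cK"
  unfolding ishom_def cK_E by (simp add: E_add[symmetric] E_mult[symmetric] E_1[symmetric] one_pCons)
lemma cK_0: "cK 0 = 0" by (rule ishom_0[OF cK_hom])
lemma cK_1: "cK 1 = 1" by (rule ishom_1[OF cK_hom])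
lemma cK_add: "cK (a + b) = cK a + cK b" by (rule ishom_add[OF cK_hom])
lemma cK_mult: "cK (a * b) = cK a * cK b" by (rule ishom_mult[OF cK_hom])

definition Lin :: "('i \<Rightarrow> K) \<Rightarrow> K set" where
  "Lin f = {(\<Sum>m\<in>S. cK (c m) * f m) | S c. finite S \<and> (\<forall>m\<in>S. c m \<in> Qcyc)}"

lemma LP_Lin: "LaurentPolys = Lin monoX" by (simp add: Lin_def LaurentPolys_def)
lemma LP1_Lin: "LaurentPolys1 = Lin (\<lambda>a. x1 powi a)" by (simp add: Lin_def LaurentPolys1_def)

lemma Lin_0: "0 \<in> Lin f"
  unfolding Lin_def by (rule CollectI, rule exI[of _ "{}"]) auto

lemma Lin_term: "c \<in> Qcyc \<Longrightarrow> cK c * f m \<in> Lin f"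
  unfolding Lin_def by (rule CollectI, rule exI[of _ "{m}"], rule exI[of _ "\<lambda>_. c"]) auto

lemma Lin_add_term:
  assumes x: "x \<in> Lin f" and c: "c \<in> Qcyc"
  shows "x + cK c * f m \<in> Lin f"
proof -
  obtain S d where S: "finite S" "\<forall>j\<in>S. d j \<in> Qcyc" and xe: "x = (\<Sum>j\<in>S. cK (d j) * f j)"
    using x unfolding Lin_def by blast
  show ?thesis
  proof (cases "m \<in> S")
    case True
    define d' where "d' = d(m := d m + c)"
    have "(\<Sum>j\<in>S. cK (d' j) * f j) = cK (d' m) * f m + (\<Sum>j\<in>S-{m}. cK (d' j) * f j)"
      using True S by (simp add: sum.remove)
    also have "(\<Sum>j\<in>S-{m}. cK (d' j) * f j) = (\<Sum>j\<in>S-{m}. cK (d j) * f j)"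
      by (rule sum.cong) (auto simp: d'_def)
    also have "cK (d' m) * f m = cK (d m) * f m + cK c * f m"
      by (simp add: d'_def cK_add algebra_simps)
    finally have "(\<Sum>j\<in>S. cK (d' j) * f j) = x + cK c * f m"
      using True S by (simp add: xe sum.remove algebra_simps)
    moreover have "\<forall>j\<in>S. d' j \<in> Qcyc" using S c by (auto simp: d'_def qc_add)
    ultimately show ?thesis using S unfolding Lin_def
      by (intro CollectI exI[of _ S] exI[of _ d']) auto
  next
    case False
    define d' where "d' = d(m := c)"
    have "(\<Sum>j\<in>insert m S. cK (d' j) * f j) = cK c * f m + (\<Sum>j\<in>S. cK (d' j) * f j)"
      using False S by (simp add: d'_def)
    also have "(\<Sum>j\<in>S. cK (d' j) * f j) = x"
      unfolding xe by (rule sum.cong) (use False in \<open>auto simp: d'_def\<close>)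
    finally have "(\<Sum>j\<in>insert m S. cK (d' j) * f j) = x + cK c * f m" by simp
    moreover have "\<forall>j\<in>insert m S. d' j \<in> Qcyc" using S c by (auto simp: d'_def)
    ultimately show ?thesis using S unfolding Lin_def
      by (intro CollectI exI[of _ "insert m S"] exI[of _ d']) auto
  qed
qed

lemma Lin_add_sum:
  assumes "x \<in> Lin f" "finite T" "\<forall>m\<in>T. d m \<in> Qcyc"
  shows "x + (\<Sum>m\<in>T. cK (d m) * f m) \<in> Lin f"
  using assms(2,3)
proof (induction T rule: finite_induct)
  case empty then show ?case using assms(1) by simp
next
  case (insert a T)
  then have "(x + (\<Sum>m\<in>T. cK (d m) * f m)) + cK (d a) * f a \<in> Lin f"
    by (intro Lin_add_term) auto
  then show ?case using insert by (simp add: algebra_simps)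
qed

lemma Lin_add: "x \<in> Lin f \<Longrightarrow> y \<in> Lin f \<Longrightarrow> x + y \<in> Lin f"
  using Lin_add_sum[of x f] by (auto simp: Lin_def[of f] intro: Lin_add_sum)

lemma Lin_sum: "(\<And>t. t \<in> T \<Longrightarrow> g t \<in> Lin f) \<Longrightarrow> sum g T \<in> Lin f"
  by (induction T rule: infinite_finite_induct) (auto simp: Lin_0 Lin_add)

lemma Lin_mult_term:
  assumes hom: "\<And>a b. f (p a b) = f a * f b"
    and x: "x \<in> Lin f" and c: "c \<in> Qcyc"
  shows "x * (cK c * f n) \<in> Lin f"
proof -
  obtain S d where S: "finite S" "\<forall>j\<in>S. d j \<in> Qcyc" and xe: "x = (\<Sum>j\<in>S. cK (d j) * f j)"
    using x unfolding Lin_def by blast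
  have "x * (cK c * f n) = (\<Sum>j\<in>S. cK (d j * c) * f (p j n))"
    unfolding xe sum_distrib_right by (rule sum.cong) (auto simp: hom cK_mult algebra_simps)
  also have "\<dots> \<in> Lin f" using S c by (intro Lin_sum Lin_term qc_mult) auto
  finally show ?thesis .
qed

lemma Lin_mult:
  assumes hom: "\<And>a b. f (p a b) = f a * f b"
    and x: "x \<in> Lin f" and y: "y \<in> Lin f"
  shows "x * y \<in> Lin f"
proof -
  obtain S d where S: "finite S" "\<forall>j\<in>S. d j \<in> Qcyc" and ye: "y = (\<Sum>j\<in>S. cK (d j) * f j)"
    using y unfolding Lin_def by blast
  show ?thesis unfolding ye sum_distrib_left
    using S by (intro Lin_sum Lin_mult_term[OF hom x]) auto
qed

lemma Lin_const: "c \<in> Qcyc \<Longrightarrow> f z = 1 \<Longrightarrow> cK c \<in> Lin f"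
  using Lin_term[of c f z] by simp


lemma x1_E: "x1 = E [:[:0,1:]:]" by (simp add: x1_def E_def)
lemma x2_E: "x2 = E (monom 1 1)" by (simp add: x2_def E_def monom_Suc monom_0)
lemma x1_nz: "x1 \<noteq> 0" by (simp add: x1_E E_eq0)
lemma x2_nz: "x2 \<noteq> 0" by (simp add: x2_E E_eq0)

lemma monoX_mult: "monoX (fst a + fst b, snd a + snd b) = monoX a * monoX b"
  by (simp add: monoX_def power_int_add x1_nz x2_nz algebra_simps)

lemma x1powi_mult: "x1 powi (a + b) = x1 powi a * x1 powi b"
  by (simp add: power_int_add x1_nz)

lemma LP_add: "x \<in> LaurentPolys \<Longrightarrow> y \<in> LaurentPolys \<Longrightarrow> x + y \<in> LaurentPolys"
  by (simp add: LP_Lin Lin_add)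
lemma LP_mult: "x \<in> LaurentPolys \<Longrightarrow> y \<in> LaurentPolys \<Longrightarrow> x * y \<in> LaurentPolys"
  unfolding LP_Lin by (rule Lin_mult[where p="\<lambda>a b. (fst a + fst b, snd a + snd b)", OF monoX_mult])
lemma LP_const: "c \<in> Qcyc \<Longrightarrow> cK c \<in> LaurentPolys"
  unfolding LP_Lin by (rule Lin_const[of c monoX "(0,0)"]) (auto simp: monoX_def)
lemma LP_0: "0 \<in> LaurentPolys" by (simp add: LP_Lin Lin_0)
lemma LP_1: "1 \<in> LaurentPolys" using LP_const[OF qc_1] by (simp add: cK_1)
lemma LP_x1powi: "x1 powi a \<in> LaurentPolys"
  unfolding LP_Lin using Lin_term[OF qc_1, of monoX "(a,0)"] by (simp add: cK_1 monoX_def)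
lemma LP_x2powi: "x2 powi a \<in> LaurentPolys"
  unfolding LP_Lin using Lin_term[OF qc_1, of monoX "(0,a)"] by (simp add: cK_1 monoX_def)
lemma LP_pow: "x \<in> LaurentPolys \<Longrightarrow> x ^ n \<in> LaurentPolys"
  by (induction n) (simp_all add: LP_1 LP_mult)
lemma LP_sum: "(\<And>t. t \<in> T \<Longrightarrow> g t \<in> LaurentPolys) \<Longrightarrow> sum g T \<in> LaurentPolys"
  unfolding LP_Lin by (rule Lin_sum)

lemma LP1_add: "x \<in> LaurentPolys1 \<Longrightarrow> y \<in> LaurentPolys1 \<Longrightarrow> x + y \<in> LaurentPolys1"
  by (simp add: LP1_Lin Lin_add)
lemma LP1_mult: "x \<in> LaurentPolys1 \<Longrightarrow> y \<in> LaurentPolys1 \<Longrightarrow> x * y \<in> LaurentPolys1"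
  unfolding LP1_Lin by (rule Lin_mult[where p="(+)", OF x1powi_mult])
lemma LP1_const: "c \<in> Qcyc \<Longrightarrow> cK c \<in> LaurentPolys1"
  unfolding LP1_Lin by (rule Lin_const[of c _ 0]) auto
lemma LP1_0: "0 \<in> LaurentPolys1" by (simp add: LP1_Lin Lin_0)
lemma LP1_1: "1 \<in> LaurentPolys1" using LP1_const[OF qc_1] by (simp add: cK_1)
lemma LP1_x1powi: "x1 powi a \<in> LaurentPolys1"
  unfolding LP1_Lin using Lin_term[OF qc_1, of "\<lambda>a. x1 powi a" a] by (simp add: cK_1)
lemma LP1_pow: "x \<in> LaurentPolys1 \<Longrightarrow> x ^ n \<in> LaurentPolys1"
  by (induction n) (simp_all add: LP1_1 LP1_mult)
lemma LP1_sum: "(\<And>t. t \<in> T \<Longrightarrow> g t \<in> LaurentPolys1) \<Longrightarrow> sum g T \<in> LaurentPolys1"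
  unfolding LP1_Lin by (rule Lin_sum)

lemma LP1_LP: "x \<in> LaurentPolys1 \<Longrightarrow> x \<in> LaurentPolys"
  unfolding LP1_Lin Lin_def
  by (auto intro!: LP_sum LP_mult LP_const LP_x1powi)

section \<open>x2-free rational functions\<close>

definition P1 :: "K set" where "P1 = range (\<lambda>p. E [:p:])"
definition F1 :: "K set" where "F1 = {x. \<exists>D\<in>P1. D \<noteq> 0 \<and> x * D \<in> P1}"

lemma P1_E: "E [:p:] \<in> P1" unfolding P1_def by (rule rangeI)
lemma P1_add: "x \<in> P1 \<Longrightarrow> y \<in> P1 \<Longrightarrow> x + y \<in> P1"
  unfolding P1_def by (auto simp: E_add[symmetric] intro!: image_eqI[where x="_ + _"])
lemma P1_mult: "x \<in> P1 \<Longrightarrow> y \<in> P1 \<Longrightarrow> x * y \<in> P1"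
  unfolding P1_def by (auto simp: E_mult[symmetric] intro!: image_eqI[where x="_ * _"])
lemma P1_1: "1 \<in> P1" unfolding P1_def by (auto simp: E_1[symmetric] one_pCons intro!: image_eqI[where x=1])
lemma P1_0: "0 \<in> P1" unfolding P1_def by (auto simp: E_0[symmetric] intro!: image_eqI[where x=0])
lemma P1_cK: "cK c \<in> P1" unfolding P1_def cK_E by (rule rangeI)
lemma P1_x1: "x1 \<in> P1" unfolding P1_def x1_E by (rule rangeI)

lemma F1I: "D \<in> P1 \<Longrightarrow> D \<noteq> 0 \<Longrightarrow> x * D \<in> P1 \<Longrightarrow> x \<in> F1"
  unfolding F1_def by blast
lemma P1_F1: "x \<in> P1 \<Longrightarrow> x \<in> F1"
  by (rule F1I[OF P1_1]) simp_all
lemma F1E: "x \<in> F1 \<Longrightarrow> (\<And>D. D \<in> P1 \<Longrightarrow> D \<noteq> 0 \<Longrightarrow> x * D \<in> P1 \<Longrightarrow> thesis) \<Longrightarrow> thesis"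
  unfolding F1_def by blast
lemma F1_add: "x \<in> F1 \<Longrightarrow> y \<in> F1 \<Longrightarrow> x + y \<in> F1"
proof -
  assume "x \<in> F1" "y \<in> F1"
  then obtain D D' where D: "D \<in> P1" "D \<noteq> 0" "x * D \<in> P1" and D': "D' \<in> P1" "D' \<noteq> 0" "y * D' \<in> P1"
    by (metis F1E)
  have e: "(x + y) * (D * D') = (x * D) * D' + (y * D') * D" by (simp add: algebra_simps)
  show "x + y \<in> F1"
  proof (rule F1I)
    show "D * D' \<in> P1" using D(1) D'(1) by (rule P1_mult)
    show "D * D' \<noteq> 0" using D(2) D'(2) by simp
    show "(x + y) * (D * D') \<in> P1" unfolding e by (rule P1_add[OF P1_mult[OF D(3) D'(1)] P1_mult[OF D'(3) D(1)]])
  qed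
qed
lemma F1_mult: "x \<in> F1 \<Longrightarrow> y \<in> F1 \<Longrightarrow> x * y \<in> F1"
proof -
  assume "x \<in> F1" "y \<in> F1"
  then obtain D D' where D: "D \<in> P1" "D \<noteq> 0" "x * D \<in> P1" and D': "D' \<in> P1" "D' \<noteq> 0" "y * D' \<in> P1"
    by (metis F1E)
  have e: "(x * y) * (D * D') = (x * D) * (y * D')" by (simp add: algebra_simps)
  show "x * y \<in> F1"
  proof (rule F1I)
    show "D * D' \<in> P1" using D(1) D'(1) by (rule P1_mult)
    show "D * D' \<noteq> 0" using D(2) D'(2) by simp
    show "(x * y) * (D * D') \<in> P1" unfolding e using D(3) D'(3) by (rule P1_mult)
  qed
qed
lemma F1_inverse: "x \<in> F1 \<Longrightarrow> inverse x \<in> F1"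
proof -
  assume "x \<in> F1"
  then obtain D where D: "D \<in> P1" "D \<noteq> 0" "x * D \<in> P1" by (metis F1E)
  show "inverse x \<in> F1"
  proof (cases "x = 0")
    case True then show ?thesis using P1_F1[OF P1_0] by simp
  next
    case False
    have e: "inverse x * (x * D) = D" using False by (simp add: mult.assoc[symmetric])
    show ?thesis
    proof (rule F1I)
      show "x * D \<in> P1" by (rule D(3))
      show "x * D \<noteq> 0" using D False by simp
      show "inverse x * (x * D) \<in> P1" unfolding e by (rule D(1))
    qed
  qed
qed
lemma F1_pow: "x \<in> F1 \<Longrightarrow> x ^ n \<in> F1"
  by (induction n) (auto intro: F1_mult P1_F1[OF P1_1])
lemma F1_powi: "x \<in> F1 \<Longrightarrow> x powi n \<in> F1"
  by (cases "n \<ge> 0") (auto simp: power_int_def intro: F1_pow F1_inverse)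
lemma F1_E: "E [:p:] \<in> F1" by (rule P1_F1[OF P1_E])
lemma F1_cK: "cK c \<in> F1" by (rule P1_F1[OF P1_cK])
lemma F1_x1: "x1 \<in> F1" by (rule P1_F1[OF P1_x1])
lemma F1_1: "1 \<in> F1" by (rule P1_F1[OF P1_1])
lemma F1_0: "0 \<in> F1" by (rule P1_F1[OF P1_0])
lemma F1_uminus: "x \<in> F1 \<Longrightarrow> - x \<in> F1"
  using F1_mult[OF F1_cK[of "-1"], of x] by (simp add: ishom_uminus[OF cK_hom] cK_1)
lemma F1_diff: "x \<in> F1 \<Longrightarrow> y \<in> F1 \<Longrightarrow> x - y \<in> F1"
  using F1_add[OF _ F1_uminus[of y], of x] by simp
lemma F1_sum: "(\<And>t. t \<in> T \<Longrightarrow> g t \<in> F1) \<Longrightarrow> sum g T \<in> F1"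
  by (induction T rule: infinite_finite_induct) (auto intro: F1_0 F1_add)
lemma LP1_F1: "x \<in> LaurentPolys1 \<Longrightarrow> x \<in> F1"
  unfolding LP1_Lin Lin_def
  by (auto intro!: F1_sum F1_mult F1_cK F1_powi F1_x1)

lemma common_denom:
  assumes "finite S" "\<forall>l\<in>S. a l \<in> F1"
  shows "\<exists>D\<in>P1. D \<noteq> 0 \<and> (\<forall>l\<in>S. a l * D \<in> P1)"
  using assms
proof (induction S rule: finite_induct)
  case empty show ?case using P1_1 by (intro bexI[of _ 1]) auto
next
  case (insert j S)
  then have "\<forall>l\<in>S. a l \<in> F1" by simp
  then obtain D where D: "D \<in> P1" "D \<noteq> 0" "\<forall>l\<in>S. a l * D \<in> P1" using insert.IH by blast
  have "a j \<in> F1" using insert.prems by simp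
  then obtain D' where D': "D' \<in> P1" "D' \<noteq> 0" "a j * D' \<in> P1" by (rule F1E)
  have "\<forall>l\<in>insert j S. a l * (D * D') \<in> P1"
  proof
    fix l assume "l \<in> insert j S"
    then show "a l * (D * D') \<in> P1"
    proof
      assume "l = j"
      have e: "a j * (D * D') = (a j * D') * D" by (simp only: ac_simps)
      show ?thesis unfolding \<open>l = j\<close> e by (rule P1_mult[OF D'(3) D(1)])
    next
      assume "l \<in> S"
      have e: "a l * (D * D') = (a l * D) * D'" by (simp only: ac_simps)
      have "a l * D \<in> P1" using D(3) \<open>l \<in> S\<close> by blast
      then show ?thesis unfolding e by (rule P1_mult[OF _ D'(1)])
    qed
  qed
  moreover have "D * D' \<in> P1" by (rule P1_mult[OF D(1) D'(1)])
  moreover have "D * D' \<noteq> 0" using D(2) D'(2) by simp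
  ultimately show ?case by blast
qed


section \<open>Uniqueness of x2-expansions\<close>

lemma E_monom: "E [:b:] * x2 ^ n = E (monom b n)"
proof -
  have "E [:b:] * x2 ^ n = E ([:b:] * monom 1 1 ^ n)" by (simp only: x2_E E_mult E_pow)
  also have "[:b:] * monom 1 1 ^ n = monom b n" by (simp add: monom_power smult_monom)
  finally show ?thesis .
qed

lemma uniq0:
  assumes S: "finite S" and a: "\<forall>l\<in>S. a l \<in> F1" and z: "(\<Sum>l\<in>S. a l * x2 powi l) = 0"
  shows "\<forall>l\<in>S. a l = 0"
proof -
  obtain D where D: "D \<in> P1" "D \<noteq> 0" "\<forall>l\<in>S. a l * D \<in> P1" using common_denom[OF S a] by blast
  have "\<forall>l\<in>S. \<exists>p. a l * D = E [:p:]" using D unfolding P1_def by auto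
  then obtain b where b: "\<forall>l\<in>S. a l * D = E [:b l:]" by metis
  define N where "N = (\<Sum>l\<in>S. nat \<bar>l\<bar>)"
  have N: "- int N \<le> l" if "l \<in> S" for l
  proof -
    have "nat \<bar>l\<bar> \<le> N" unfolding N_def using S that by (intro member_le_sum) auto
    then show ?thesis by linarith
  qed
  define g where "g l = nat (l + int N)" for l
  have ginj: "inj_on g S"
  proof (rule inj_onI)
    fix x y assume "x \<in> S" "y \<in> S" "g x = g y"
    then show "x = y" using N[of x] N[of y] unfolding g_def by (simp add: nat_eq_iff)
  qed
  have "0 = D * x2 ^ N * (\<Sum>l\<in>S. a l * x2 powi l)" using z by simp
  also have "\<dots> = (\<Sum>l\<in>S. E (monom (b l) (g l)))"
    unfolding sum_distrib_left
  proof (rule sum.cong[OF refl])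
    fix l assume l: "l \<in> S"
    have "x2 powi l * x2 ^ N = x2 powi (l + int N)" by (simp add: power_int_add x2_nz)
    also have "\<dots> = x2 ^ g l" unfolding g_def using N[OF l] by (simp add: power_int_nonneg_exp)
    finally have "D * x2 ^ N * (a l * x2 powi l) = (a l * D) * x2 ^ g l"
      by (simp add: algebra_simps)
    also have "\<dots> = E (monom (b l) (g l))" using b l by (simp add: E_monom)
    finally show "D * x2 ^ N * (a l * x2 powi l) = E (monom (b l) (g l))" .
  qed
  also have "\<dots> = E (\<Sum>l\<in>S. monom (b l) (g l))" by (simp add: ishom_sum[OF E_hom_aux])
  finally have P0: "(\<Sum>l\<in>S. monom (b l) (g l)) = 0" by (simp add: E_eq0)
  show ?thesis
  proof
    fix l assume l: "l \<in> S"
    have "coeff (\<Sum>j\<in>S. monom (b j) (g j)) (g l) = (\<Sum>j\<in>S. if j = l then b j else 0)"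
      unfolding coeff_sum coeff_monom
      by (rule sum.cong[OF refl]) (use ginj l in \<open>auto simp: inj_on_def\<close>)
    also have "\<dots> = b l" using S l by simp
    finally have "b l = 0" using P0 by simp
    then have "a l * D = 0" using b l by (simp add: E_0)
    then show "a l = 0" using D by simp
  qed
qed


lemma uniq:
  assumes S: "finite S" and T: "finite T" and a: "\<forall>l\<in>S. a l \<in> F1" and b: "\<forall>l\<in>T. b l \<in> F1"
    and eq: "(\<Sum>l\<in>S. a l * x2 powi l) = (\<Sum>l\<in>T. b l * x2 powi l)"
  shows "(if l \<in> S then a l else 0) = (if l \<in> T then b l else 0)"
proof -
  define a' where "a' l = (if l \<in> S then a l else 0)" for l
  define b' where "b' l = (if l \<in> T then b l else 0)" for l
  have "(\<Sum>l\<in>S. a l * x2 powi l) = (\<Sum>l\<in>S \<union> T. a' l * x2 powi l)"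
    using S T by (intro sum.mono_neutral_cong_left) (auto simp: a'_def)
  moreover have "(\<Sum>l\<in>T. b l * x2 powi l) = (\<Sum>l\<in>S \<union> T. b' l * x2 powi l)"
    using S T by (intro sum.mono_neutral_cong_left) (auto simp: b'_def)
  ultimately have "(\<Sum>l\<in>S \<union> T. (a' l - b' l) * x2 powi l) = 0"
    using eq by (simp add: algebra_simps sum_subtractf)
  moreover have "\<forall>l\<in>S \<union> T. a' l - b' l \<in> F1"
    using a b by (auto simp: a'_def b'_def intro!: F1_diff F1_uminus F1_0)
  ultimately have "\<forall>l\<in>S \<union> T. a' l - b' l = 0" using S T by (intro uniq0) auto
  then have "a' l = b' l" by (cases "l \<in> S \<union> T") (auto simp: a'_def b'_def)
  then show ?thesis by (simp add: a'_def b'_def)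
qed

section \<open>Substitution\<close>

lemma h_hom: "ishom (\<lambda>q. poly (map_poly cK q) y1)" by (rule ev_hom[OF cK_hom])

lemma subst2_alt: "subst2 y1 y2 = (\<lambda>p. poly (map_poly (\<lambda>q. poly (map_poly cK q) y1) p) y2)"
  by (simp add: subst2_def fun_eq_iff)

lemma subst2_hom: "ishom (subst2 y1 y2)"
  unfolding subst2_alt by (rule ev_hom[OF h_hom])

lemma h_x1: "poly (map_poly cK q) x1 = E [:q:]"
proof (induction q)
  case 0 then show ?case by (simp add: E_0)
next
  case (pCons a q)
  have "E [:pCons a q:] = E [:[:a:]:] + E [:[:0,1:]:] * E [:q:]"
    by (simp add: E_add[symmetric] E_mult[symmetric])
  moreover have "poly (map_poly cK (pCons a q)) x1 = cK a + x1 * poly (map_poly cK q) x1"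
    by (simp add: map_poly_pCons cK_0)
  ultimately show ?case using pCons.IH by (simp only: cK_E[of a] x1_E)
qed

lemma subst2_const: "subst2 y1 y2 [:[:c:]:] = cK c"
  by (simp add: subst2_def cK_0 map_poly_pCons)
lemma subst2_x1: "subst2 y1 y2 [:[:0,1:]:] = y1"
  by (simp add: subst2_def cK_0 cK_1 map_poly_pCons)
lemma subst2_x2: "subst2 y1 y2 [:0,1:] = y2"
  by (simp add: subst2_def cK_0 cK_1 map_poly_pCons)

lemma subst2_nz:
  assumes r: "r \<in> F1" "r \<noteq> 0" and q: "q \<noteq> 0"
  shows "subst2 x1 (x2 * r) q \<noteq> 0"
proof
  assume z: "subst2 x1 (x2 * r) q = 0"
  define h where "h q = E [:q:]" for q
  have hz: "h 0 = 0" by (simp add: h_def E_0)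
  define d where "d = degree (map_poly h q)"
  have "subst2 x1 (x2 * r) q = poly (map_poly h q) (x2 * r)"
    by (simp add: subst2_def h_x1 h_def[abs_def])
  also have "\<dots> = (\<Sum>i\<le>d. h (coeff q i) * (x2 * r) ^ i)"
    unfolding poly_altdef[of "map_poly h q"] d_def by (simp add: coeff_map_poly hz)
  also have "\<dots> = (\<Sum>i\<in>{..d}. (h (coeff q i) * r ^ i) * x2 powi (int i))"
    by (simp add: power_mult_distrib algebra_simps)
  also have "\<dots> = (\<Sum>l\<in>int ` {..d}. (h (coeff q (nat l)) * r ^ (nat l)) * x2 powi l)"
    by (subst sum.reindex) (auto simp: inj_on_def)
  finally have "\<forall>l\<in>int ` {..d}. h (coeff q (nat l)) * r ^ (nat l) = 0"
    using z by (intro uniq0) (auto simp: h_def intro!: F1_mult F1_pow r(1) F1_E)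
  then have A: "i \<le> d \<Longrightarrow> h (coeff q i) = 0" for i using r by force
  have B: "i > d \<Longrightarrow> h (coeff q i) = 0" for i
    using coeff_eq_0[of "map_poly h q" i] by (simp add: d_def coeff_map_poly hz)
  have "coeff q i = 0" for i using A[of i] B[of i] by (cases "i \<le> d") (auto simp: h_def E_eq0)
  then show False using q by (simp add: poly_eq_iff)
qed


section \<open>The mutation maps\<close>

definition muY :: "K \<Rightarrow> K \<Rightarrow> K \<Rightarrow> K" where
  "muY y1 y2 f = (SOME r. \<exists>p q. q \<noteq> 0 \<and> f = Fract p q \<and> r = subst2 y1 y2 p / subst2 y1 y2 q)"

definition nzs :: "K \<Rightarrow> K \<Rightarrow> bool" where
  "nzs y1 y2 \<longleftrightarrow> (\<forall>q. q \<noteq> 0 \<longrightarrow> subst2 y1 y2 q \<noteq> 0)"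

lemma mu_e2: "mu k (0,1) = muY x1 (x2 * inverse (1 + x1 powi k))"
  by (simp add: fun_eq_iff mu_def muY_def omega_def monoX_def power_int_minus Let_def)

lemma mu_me2: "mu k (0,-1) = muY x1 (x2 * (1 + x1 powi (-k)))"
  by (simp add: fun_eq_iff mu_def muY_def omega_def monoX_def Let_def)

lemma muY_Fract:
  assumes nz: "nzs y1 y2" and q: "q \<noteq> 0"
  shows "muY y1 y2 (Fract p q) = subst2 y1 y2 p / subst2 y1 y2 q"
proof -
  let ?S = "subst2 y1 y2"
  have hom: "ishom ?S" by (rule subst2_hom)
  have "\<exists>r. \<exists>p' q'. q' \<noteq> 0 \<and> Fract p q = Fract p' q' \<and> r = ?S p' / ?S q'"
    using q by blast
  from someI_ex[OF this] obtain p' q' where pq: "q' \<noteq> 0" "Fract p q = Fract p' q'"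
    and e: "muY y1 y2 (Fract p q) = ?S p' / ?S q'"
    unfolding muY_def by blast
  have "p * q' = p' * q" using pq q by (simp add: eq_fract)
  then have "?S p * ?S q' = ?S p' * ?S q" by (metis ishom_mult[OF hom])
  moreover have "?S q \<noteq> 0" "?S q' \<noteq> 0" using nz q pq(1) unfolding nzs_def by auto
  ultimately show ?thesis unfolding e by (simp add: frac_eq_eq)
qed

lemma muY_hom:
  assumes nz: "nzs y1 y2"
  shows "ishom (muY y1 y2)"
proof -
  let ?S = "subst2 y1 y2"
  have hom: "ishom ?S" by (rule subst2_hom)
  have nzq: "q \<noteq> 0 \<Longrightarrow> ?S q \<noteq> 0" for q using nz unfolding nzs_def by auto
  have add: "muY y1 y2 (f + g) = muY y1 y2 f + muY y1 y2 g" for f g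
  proof -
    obtain a b where f: "f = Fract a b" "b \<noteq> 0" by (cases f)
    obtain c d where g: "g = Fract c d" "d \<noteq> 0" by (cases g)
    have "muY y1 y2 (f + g) = ?S (a * d + c * b) / ?S (b * d)"
      using f g by (simp add: muY_Fract[OF nz])
    also have "\<dots> = ?S a / ?S b + ?S c / ?S d"
      using nzq[OF f(2)] nzq[OF g(2)]
      by (simp add: ishom_add[OF hom] ishom_mult[OF hom] field_simps)
    finally show ?thesis using f g by (simp add: muY_Fract[OF nz])
  qed
  have mult: "muY y1 y2 (f * g) = muY y1 y2 f * muY y1 y2 g" for f g
  proof -
    obtain a b where f: "f = Fract a b" "b \<noteq> 0" by (cases f)
    obtain c d where g: "g = Fract c d" "d \<noteq> 0" by (cases g)
    have "muY y1 y2 (f * g) = ?S (a * c) / ?S (b * d)"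
      using f g by (simp add: muY_Fract[OF nz])
    also have "\<dots> = ?S a / ?S b * (?S c / ?S d)"
      by (simp add: ishom_mult[OF hom])
    finally show ?thesis using f g by (simp add: muY_Fract[OF nz])
  qed
  have one: "muY y1 y2 1 = 1"
    using muY_Fract[OF nz, of 1 1] nzq[of 1] by (simp add: One_fract_def)
  show ?thesis unfolding ishom_def using add mult one by blast
qed

lemma muY_E: "nzs y1 y2 \<Longrightarrow> muY y1 y2 (E p) = subst2 y1 y2 p"
  using muY_Fract[of y1 y2 1 p] by (simp add: E_def ishom_1[OF subst2_hom])

lemma muY_x1: "nzs y1 y2 \<Longrightarrow> muY y1 y2 x1 = y1"
  by (simp add: x1_E muY_E subst2_x1)
lemma muY_x2: "nzs y1 y2 \<Longrightarrow> muY y1 y2 x2 = y2"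
  using muY_E[of y1 y2 "[:0,1:]"] by (simp add: x2_def E_def subst2_x2)
lemma muY_cK: "nzs y1 y2 \<Longrightarrow> muY y1 y2 (cK c) = cK c"
  by (simp add: cK_E muY_E subst2_const)

lemma ishom_inverse:
  fixes g :: "K \<Rightarrow> K"
  assumes h: "ishom g" shows "g (inverse a) = inverse (g a)"
proof (cases "a = 0")
  case True then show ?thesis by (simp add: ishom_0[OF h])
next
  case False
  have "g a * g (inverse a) = 1" using False by (simp add: ishom_mult[OF h, symmetric] ishom_1[OF h])
  then show ?thesis by (metis inverse_unique)
qed

lemma ishom_divide:
  fixes g :: "K \<Rightarrow> K"
  assumes h: "ishom g" shows "g (a / b) = g a / g b"
  by (simp add: divide_inverse ishom_mult[OF h] ishom_inverse[OF h])

lemma ishom_powi: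
  fixes g :: "K \<Rightarrow> K"
  assumes h: "ishom g" shows "g (a powi n) = g a powi n"
  by (simp add: power_int_def ishom_pow[OF h] ishom_inverse[OF h])

lemma ishom_funpow:
  fixes g :: "K \<Rightarrow> K"
  assumes h: "ishom g" shows "ishom (g ^^ n)"
proof (induction n)
  case 0 then show ?case by (simp add: ishom_def)
next
  case (Suc n) then show ?case using h by (simp add: ishom_def)
qed

definition fixes1 :: "(K \<Rightarrow> K) \<Rightarrow> bool" where
  "fixes1 g \<longleftrightarrow> ishom g \<and> g x1 = x1 \<and> (\<forall>c. g (cK c) = cK c)"

lemma fixes1_x1powi: "fixes1 g \<Longrightarrow> g (x1 powi a) = x1 powi a"
  by (simp add: fixes1_def ishom_powi)
lemma fixes1_u: "fixes1 g \<Longrightarrow> g (1 + x1 powi a) = 1 + x1 powi a"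
  by (simp add: fixes1_x1powi ishom_add ishom_1 fixes1_def)
lemma fixes1_LP1: "fixes1 g \<Longrightarrow> x \<in> LaurentPolys1 \<Longrightarrow> g x = x"
  unfolding LP1_Lin Lin_def
  by (auto simp: fixes1_def ishom_sum ishom_mult ishom_powi)

lemma fixes1_funpow: "fixes1 g \<Longrightarrow> fixes1 (g ^^ n)"
proof (induction n)
  case 0 then show ?case by (simp add: fixes1_def ishom_def)
next
  case (Suc n)
  have "ishom (g ^^ Suc n)" using Suc.prems by (intro ishom_funpow) (simp add: fixes1_def)
  moreover have "(g ^^ Suc n) x1 = x1" "\<And>c. (g ^^ Suc n) (cK c) = cK c"
    using Suc by (simp_all add: fixes1_def)
  ultimately show ?case by (simp add: fixes1_def del: funpow.simps)
qed

lemma funpow_x2: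
  assumes f: "fixes1 g" and gx: "g x2 = x2 * r" and gr: "g r = r"
  shows "(g ^^ n) x2 = x2 * r ^ n"
proof (induction n)
  case 0 then show ?case by simp
next
  case (Suc n)
  have h: "ishom g" using f by (simp add: fixes1_def)
  show ?case using Suc by (simp add: ishom_mult[OF h] ishom_pow[OF h] gx gr algebra_simps)
qed


lemma x1pow_ne: "n > 0 \<Longrightarrow> x1 ^ n \<noteq> -1"
proof
  assume n: "n > 0" and e: "x1 ^ n = -1"
  have "E ([:[:0,1:]:] ^ n) = E (-1)"
    using e by (simp add: x1_E E_pow ishom_uminus[OF E_hom_aux] E_1)
  then have "([:[:0,1:]:] :: complex poly poly) ^ n = -1" unfolding E_eq .
  then have "poly (poly ([:[:0,1:]:] ^ n) 0) 0 = poly (poly (-1) 0) (0::complex)" by simp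
  then show False using n by (simp add: poly_power zero_power)
qed

lemma u_nz: "k \<noteq> 0 \<Longrightarrow> 1 + x1 powi k \<noteq> 0"
proof
  assume k: "k \<noteq> 0" and z: "1 + x1 powi k = 0"
  then have z': "x1 powi k = -1" by (simp add: add_eq_0_iff)
  show False
  proof (cases "k > 0")
    case True
    then have "x1 ^ nat k = -1" using z' by (simp add: power_int_def)
    then show False using x1pow_ne[of "nat k"] True by simp
  next
    case False
    then have "inverse (x1 ^ nat (-k)) = -1" using z' k by (simp add: power_int_def power_inverse)
    then have "x1 ^ nat (-k) = -1" by (metis inverse_inverse_eq inverse_minus_eq inverse_1)
    then show False using x1pow_ne[of "nat (-k)"] False k by simp
  qed
qed

lemma expand:
  assumes "P \<in> LaurentPolys"
  shows "\<exists>S p. finite S \<and> (\<forall>l\<in>S. p l \<in> LaurentPolys1) \<and> P = (\<Sum>l\<in>S. p l * x2 powi l)"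
proof -
  obtain S0 c where S0: "finite S0" "\<forall>m\<in>S0. c m \<in> Qcyc"
    and P: "P = (\<Sum>m\<in>S0. cK (c m) * monoX m)"
    using assms unfolding LP_Lin Lin_def by blast
  define p where "p l = (\<Sum>m\<in>{m\<in>S0. snd m = l}. cK (c m) * x1 powi (fst m))" for l
  have "P = (\<Sum>l\<in>snd ` S0. \<Sum>m\<in>{m\<in>S0. snd m = l}. cK (c m) * monoX m)"
    unfolding P by (rule sum.image_gen[OF S0(1)])
  also have "\<dots> = (\<Sum>l\<in>snd ` S0. p l * x2 powi l)"
    unfolding p_def sum_distrib_right
    by (intro sum.cong refl) (auto simp: monoX_def algebra_simps)
  finally have "P = (\<Sum>l\<in>snd ` S0. p l * x2 powi l)" .
  moreover have "\<forall>l\<in>snd ` S0. p l \<in> LaurentPolys1"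
    using S0 unfolding p_def by (auto intro!: LP1_sum LP1_mult LP1_const LP1_x1powi)
  ultimately show ?thesis using S0(1) by blast
qed

lemma hom_expand:
  assumes f: "fixes1 g" and gx: "g x2 = x2 * s" and p: "\<forall>l\<in>S. p l \<in> LaurentPolys1"
  shows "g (\<Sum>l\<in>S. p l * x2 powi l) = (\<Sum>l\<in>S. (p l * s powi l) * x2 powi l)"
proof -
  have h: "ishom g" using f by (simp add: fixes1_def)
  show ?thesis
    unfolding ishom_sum[OF h]
    by (rule sum.cong[OF refl])
       (use p in \<open>simp add: ishom_mult[OF h] ishom_powi[OF h] gx fixes1_LP1[OF f] power_int_mult_distrib\<close>)
qed

context
  fixes k :: int
  assumes k: "k \<noteq> 0"
begin

definition "uu = 1 + x1 powi k"
definition "ss = 1 + x1 powi (-k)"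

lemma uu_nz: "uu \<noteq> 0" using u_nz[OF k] by (simp add: uu_def)
lemma ss_nz: "ss \<noteq> 0" using u_nz[of "-k"] k by (simp add: ss_def)
lemma uu_F1: "uu \<in> F1" unfolding uu_def by (intro F1_add F1_1 F1_powi F1_x1)
lemma ss_F1: "ss \<in> F1" unfolding ss_def by (intro F1_add F1_1 F1_powi F1_x1)
lemma uu_LP: "uu \<in> LaurentPolys" unfolding uu_def by (intro LP_add LP_1 LP_x1powi)
lemma ss_LP: "ss \<in> LaurentPolys" unfolding ss_def by (intro LP_add LP_1 LP_x1powi)
lemma uu_LP1: "uu \<in> LaurentPolys1" unfolding uu_def by (intro LP1_add LP1_1 LP1_x1powi)
lemma ss_uu: "ss = x1 powi (-k) * uu"
  unfolding ss_def uu_def by (simp add: algebra_simps power_int_minus x1_nz)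

lemma nzs_e2: "nzs x1 (x2 * inverse uu)"
  unfolding nzs_def using uu_nz uu_F1 subst2_nz[of "inverse uu"] F1_inverse[of uu] by auto
lemma nzs_me2: "nzs x1 (x2 * ss)"
  unfolding nzs_def using ss_nz ss_F1 subst2_nz[of ss] by auto

lemma mu_e2': "mu k (0,1) = muY x1 (x2 * inverse uu)" by (simp add: mu_e2 uu_def)
lemma mu_me2': "mu k (0,-1) = muY x1 (x2 * ss)" by (simp add: mu_me2 ss_def)

lemma fixes_e2: "fixes1 (mu k (0,1))"
  unfolding mu_e2' fixes1_def using nzs_e2 by (simp add: muY_hom muY_x1 muY_cK)
lemma fixes_me2: "fixes1 (mu k (0,-1))"
  unfolding mu_me2' fixes1_def using nzs_me2 by (simp add: muY_hom muY_x1 muY_cK)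

lemma e2_x2: "(mu k (0,1) ^^ n) x2 = x2 * inverse uu ^ n"
proof (rule funpow_x2[OF fixes_e2])
  show "mu k (0,1) x2 = x2 * inverse uu" unfolding mu_e2' using nzs_e2 by (simp add: muY_x2)
  show "mu k (0,1) (inverse uu) = inverse uu"
    using fixes_e2 by (simp add: fixes1_def ishom_inverse fixes1_u[OF fixes_e2] uu_def)
qed

lemma me2_x2: "(mu k (0,-1) ^^ n) x2 = x2 * ss ^ n"
proof (rule funpow_x2[OF fixes_me2])
  show "mu k (0,-1) x2 = x2 * ss" unfolding mu_me2' using nzs_me2 by (simp add: muY_x2)
  show "mu k (0,-1) ss = ss"
    using fixes1_u[OF fixes_me2] by (simp add: ss_def)
qed

end



lemma LP_x1: "x1 \<in> LaurentPolys" using LP_x1powi[of 1] by simp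
lemma LP_x2: "x2 \<in> LaurentPolys" using LP_x2powi[of 1] by simp
lemma LP_ix1: "inverse x1 \<in> LaurentPolys" using LP_x1powi[of "-1"] by (simp add: power_int_minus)
lemma LP_ix2: "inverse x2 \<in> LaurentPolys" using LP_x2powi[of "-1"] by (simp add: power_int_minus)

lemma img_add: "ishom g \<Longrightarrow> a \<in> g ` LaurentPolys \<Longrightarrow> b \<in> g ` LaurentPolys \<Longrightarrow> a + b \<in> g ` LaurentPolys"
  by (auto simp: ishom_add[symmetric] intro!: imageI LP_add)
lemma img_mult: "ishom g \<Longrightarrow> a \<in> g ` LaurentPolys \<Longrightarrow> b \<in> g ` LaurentPolys \<Longrightarrow> a * b \<in> g ` LaurentPolys"
  by (auto simp: ishom_mult[symmetric] intro!: imageI LP_mult)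
lemma img_const: "fixes1 g \<Longrightarrow> c \<in> Qcyc \<Longrightarrow> cK c \<in> g ` LaurentPolys"
  by (rule image_eqI[of _ _ "cK c"]) (auto simp: fixes1_def LP_const)

lemma alg_0: "0 \<in> alg_gen G" using alg_gen.const[OF qc_0, of G] by (simp add: cK_0)
lemma alg_1: "1 \<in> alg_gen G" using alg_gen.const[OF qc_1, of G] by (simp add: cK_1)
lemma alg_pow: "a \<in> alg_gen G \<Longrightarrow> a ^ n \<in> alg_gen G"
  by (induction n) (auto intro: alg_1 alg_gen.mult)
lemma alg_sum: "(\<And>t. t \<in> T \<Longrightarrow> f t \<in> alg_gen G) \<Longrightarrow> sum f T \<in> alg_gen G"
  by (induction T rule: infinite_finite_induct) (auto intro: alg_0 alg_gen.add)
lemma alg_x1powi: "x1 \<in> G \<Longrightarrow> inverse x1 \<in> G \<Longrightarrow> x1 powi a \<in> alg_gen G"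
  by (cases "a \<ge> 0") (simp_all add: power_int_def alg_pow alg_gen.gen)
lemma alg_LP1: "x1 \<in> G \<Longrightarrow> inverse x1 \<in> G \<Longrightarrow> d \<in> LaurentPolys1 \<Longrightarrow> d \<in> alg_gen G"
  unfolding LP1_Lin Lin_def
  by (auto intro!: alg_sum alg_gen.mult alg_gen.const alg_x1powi)

context
  fixes k :: int
  assumes k: "k \<noteq> 0"
begin

lemma pw1: "l \<le> 0 \<Longrightarrow> (inverse (uu k) ^ m) powi l = uu k ^ nat (- int m * l)"
proof -
  assume "l \<le> 0"
  then obtain n where l: "l = - int n" by (metis neg_int_cases nonpos_int_cases)
  have "nat (- int m * l) = m * n" unfolding l by (simp add: nat_mult_distrib)
  then show ?thesis unfolding l
    by (simp add: power_int_minus power_mult power_inverse)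
qed

lemma pw2: "l \<ge> 0 \<Longrightarrow> (ss k ^ m) powi l = uu k ^ nat (int m * l) * (x1 powi (-k)) ^ (m * nat l)"
proof -
  assume "l \<ge> 0"
  then obtain n where l: "l = int n" by (metis nonneg_int_cases)
  have "nat (int m * l) = m * n" unfolding l by (simp add: nat_mult_distrib)
  then show ?thesis unfolding l ss_uu[OF k]
    by (simp add: power_mult power_mult_distrib mult.commute)
qed


definition Tset :: "nat \<Rightarrow> nat \<Rightarrow> K set" where
  "Tset m1 m2 = {W. \<exists>S c. finite S \<and> (\<forall>l\<in>S. c l \<in> LaurentPolys1)
                 \<and> W = (\<Sum>l\<in>S. c l * x2 powi l)
                 \<and> (\<forall>l\<in>S. l \<le> 0 \<longrightarrow>
                       (\<exists>d\<in>LaurentPolys1. c l = (1 + x1 powi k) ^ nat (- int m1 * l) * d))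
                 \<and> (\<forall>l\<in>S. l \<ge> 0 \<longrightarrow>
                       (\<exists>d\<in>LaurentPolys1. c l = (1 + x1 powi k) ^ nat (int m2 * l) * d))}"

lemma U_sub_T:
  assumes W: "W \<in> LaurentPolys" and WP: "W \<in> (mu k (0,1) ^^ m1) ` LaurentPolys"
    and WQ: "W \<in> (mu k (0,-1) ^^ m2) ` LaurentPolys"
  shows "W \<in> Tset m1 m2"
proof -
  obtain S c where S: "finite S" "\<forall>l\<in>S. c l \<in> LaurentPolys1" and We: "W = (\<Sum>l\<in>S. c l * x2 powi l)"
    using expand[OF W] by blast
  obtain P where P: "P \<in> LaurentPolys" and WPe: "W = (mu k (0,1) ^^ m1) P" using WP by blast
  obtain SP p where SP: "finite SP" "\<forall>l\<in>SP. p l \<in> LaurentPolys1" and Pe: "P = (\<Sum>l\<in>SP. p l * x2 powi l)"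
    using expand[OF P] by blast
  obtain Q where Q: "Q \<in> LaurentPolys" and WQe: "W = (mu k (0,-1) ^^ m2) Q" using WQ by blast
  obtain SQ q where SQ: "finite SQ" "\<forall>l\<in>SQ. q l \<in> LaurentPolys1" and Qe: "Q = (\<Sum>l\<in>SQ. q l * x2 powi l)"
    using expand[OF Q] by blast
  have W1: "W = (\<Sum>l\<in>SP. (p l * (inverse (uu k) ^ m1) powi l) * x2 powi l)"
    unfolding WPe Pe
    by (rule hom_expand[OF fixes1_funpow[OF fixes_e2[OF k]] e2_x2[OF k] SP(2)])
  have W2: "W = (\<Sum>l\<in>SQ. (q l * (ss k ^ m2) powi l) * x2 powi l)"
    unfolding WQe Qe
    by (rule hom_expand[OF fixes1_funpow[OF fixes_me2[OF k]] me2_x2[OF k] SQ(2)])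
  have cF: "\<forall>l\<in>S. c l \<in> F1" using S(2) LP1_F1 by blast
  have E1: "(if l \<in> S then c l else 0) = (if l \<in> SP then p l * (inverse (uu k) ^ m1) powi l else 0)" for l
  proof -
    have "\<forall>l\<in>SP. p l * (inverse (uu k) ^ m1) powi l \<in> F1"
      using SP(2) F1_mult[OF LP1_F1 F1_powi[OF F1_pow[OF F1_inverse[OF uu_F1[OF k]]]]] by blast
    from uniq[OF S(1) SP(1) cF this] show ?thesis using We W1 by simp
  qed
  have E2: "(if l \<in> S then c l else 0) = (if l \<in> SQ then q l * (ss k ^ m2) powi l else 0)" for l
  proof -
    have "\<forall>l\<in>SQ. q l * (ss k ^ m2) powi l \<in> F1"
      using SQ(2) F1_mult[OF LP1_F1 F1_powi[OF F1_pow[OF ss_F1[OF k]]]] by blast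
    from uniq[OF S(1) SQ(1) cF this] show ?thesis using We W2 by simp
  qed
  have C1: "\<exists>d\<in>LaurentPolys1. c l = (1 + x1 powi k) ^ nat (- int m1 * l) * d" if l: "l \<in> S" "l \<le> 0" for l
  proof (cases "l \<in> SP")
    case True
    then have "c l = p l * (inverse (uu k) ^ m1) powi l" using E1[of l] l by simp
    also have "\<dots> = (1 + x1 powi k) ^ nat (- int m1 * l) * p l"
      using pw1[OF l(2), of m1] by (simp add: uu_def[OF k])
    finally show ?thesis using SP(2) True by blast
  next
    case False
    then have "c l = 0" using E1[of l] l by simp
    then show ?thesis using LP1_0 by (intro bexI[of _ 0]) auto
  qed
  have C2: "\<exists>d\<in>LaurentPolys1. c l = (1 + x1 powi k) ^ nat (int m2 * l) * d" if l: "l \<in> S" "l \<ge> 0" for l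
  proof (cases "l \<in> SQ")
    case True
    then have "c l = q l * (ss k ^ m2) powi l" using E2[of l] l by simp
    also have "\<dots> = (1 + x1 powi k) ^ nat (int m2 * l) * (q l * (x1 powi (-k)) ^ (m2 * nat l))"
      using pw2[OF l(2), of m2] by (simp add: uu_def[OF k] algebra_simps)
    finally show ?thesis using SQ(2) True by (blast intro: LP1_mult LP1_pow LP1_x1powi)
  next
    case False
    then have "c l = 0" using E2[of l] l by simp
    then show ?thesis using LP1_0 by (intro bexI[of _ 0]) auto
  qed
  show ?thesis unfolding Tset_def using S We C1 C2 by blast
qed


abbreviation "Gens m1 m2 \<equiv> {x1, inverse x1, x2 * (1 + x1 powi k) ^ m2, (1 + x1 powi k) ^ m1 / x2}"

lemma T_sub_A: "W \<in> Tset m1 m2 \<Longrightarrow> W \<in> alg_gen (Gens m1 m2)"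
proof -
  assume "W \<in> Tset m1 m2"
  then obtain S c where S: "finite S" "\<forall>l\<in>S. c l \<in> LaurentPolys1"
    and We: "W = (\<Sum>l\<in>S. c l * x2 powi l)"
    and C1: "\<forall>l\<in>S. l \<le> 0 \<longrightarrow> (\<exists>d\<in>LaurentPolys1. c l = (1 + x1 powi k) ^ nat (- int m1 * l) * d)"
    and C2: "\<forall>l\<in>S. l \<ge> 0 \<longrightarrow> (\<exists>d\<in>LaurentPolys1. c l = (1 + x1 powi k) ^ nat (int m2 * l) * d)"
    unfolding Tset_def by blast
  let ?A = "alg_gen (Gens m1 m2)"
  let ?u = "1 + x1 powi k"
  have dA: "d \<in> LaurentPolys1 \<Longrightarrow> d \<in> ?A" for d by (rule alg_LP1) auto
  have "c l * x2 powi l \<in> ?A" if l: "l \<in> S" for l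
  proof (cases "l \<ge> 0")
    case True
    then obtain d where d: "d \<in> LaurentPolys1" "c l = ?u ^ nat (int m2 * l) * d" using C2 l by blast
    obtain n where n: "l = int n" using True by (metis nonneg_int_cases)
    have "c l * x2 powi l = d * (x2 * ?u ^ m2) ^ n"
      unfolding d(2) unfolding n by (simp add: nat_mult_distrib power_mult power_mult_distrib algebra_simps)
    also have "\<dots> \<in> ?A" by (intro alg_gen.mult dA d(1) alg_pow alg_gen.gen) auto
    finally show ?thesis .
  next
    case False
    then obtain d where d: "d \<in> LaurentPolys1" "c l = ?u ^ nat (- int m1 * l) * d" using C1 l by auto
    obtain n where n: "l = - int n" using False by (metis neg_int_cases nonpos_int_cases linorder_not_le less_imp_le)
    have "c l * x2 powi l = d * (?u ^ m1 / x2) ^ n"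
      unfolding d(2) unfolding n
      by (simp add: nat_mult_distrib power_mult power_mult_distrib power_int_minus divide_inverse power_inverse algebra_simps)
    also have "\<dots> \<in> ?A" by (intro alg_gen.mult dA d(1) alg_pow alg_gen.gen) auto
    finally show ?thesis .
  qed
  then show ?thesis unfolding We by (intro alg_sum) auto
qed

lemma UB_eq: "upper_bound k (coll2 m1 m2) = LaurentPolys \<inter> (mu k (0,1) ^^ m1) ` LaurentPolys \<inter> (mu k (0,-1) ^^ m2) ` LaurentPolys"
proof -
  define F where "F v = (mu k v ^^ coll2 m1 m2 v) ` LaurentPolys" for v
  have F1: "F (0,1) = (mu k (0,1) ^^ m1) ` LaurentPolys" by (simp add: F_def coll2_def)
  have F2: "F (0,-1) = (mu k (0,-1) ^^ m2) ` LaurentPolys" by (simp add: F_def coll2_def)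
  have F3: "v \<noteq> (0,1) \<Longrightarrow> v \<noteq> (0,-1) \<Longrightarrow> F v = LaurentPolys" for v by (simp add: F_def coll2_def)
  have "LaurentPolys \<inter> (\<Inter>v. F v) = LaurentPolys \<inter> F (0,1) \<inter> F (0,-1)"
  proof
    show "LaurentPolys \<inter> (\<Inter>v. F v) \<subseteq> LaurentPolys \<inter> F (0,1) \<inter> F (0,-1)" by blast
    show "LaurentPolys \<inter> F (0,1) \<inter> F (0,-1) \<subseteq> LaurentPolys \<inter> (\<Inter>v. F v)"
    proof
      fix x assume x: "x \<in> LaurentPolys \<inter> F (0,1) \<inter> F (0,-1)"
      have "x \<in> F v" for v
        using x F3[of v] by (cases "v = (0,1)"; cases "v = (0,-1)") auto
      then show "x \<in> LaurentPolys \<inter> (\<Inter>v. F v)" using x by blast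
    qed
  qed
  then show ?thesis unfolding upper_bound_def F_def[symmetric] F1 F2 by simp
qed

lemma A_sub_U: "W \<in> alg_gen (Gens m1 m2) \<Longrightarrow> W \<in> LaurentPolys \<inter> (mu k (0,1) ^^ m1) ` LaurentPolys \<inter> (mu k (0,-1) ^^ m2) ` LaurentPolys"
proof -
  let ?u = "1 + x1 powi k"
  define \<phi> where "\<phi> = mu k (0,1) ^^ m1"
  define \<psi> where "\<psi> = mu k (0,-1) ^^ m2"
  have f\<phi>: "fixes1 \<phi>" unfolding \<phi>_def by (rule fixes1_funpow[OF fixes_e2[OF k]])
  have f\<psi>: "fixes1 \<psi>" unfolding \<psi>_def by (rule fixes1_funpow[OF fixes_me2[OF k]])
  have h\<phi>: "ishom \<phi>" and h\<psi>: "ishom \<psi>" using f\<phi> f\<psi> by (simp_all add: fixes1_def)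
  have \<phi>x2: "\<phi> x2 = x2 * inverse ?u ^ m1" unfolding \<phi>_def using e2_x2[OF k] by (simp add: uu_def[OF k])
  have \<psi>x2: "\<psi> x2 = x2 * (1 + x1 powi (-k)) ^ m2" unfolding \<psi>_def using me2_x2[OF k] by (simp add: ss_def[OF k])
  have unz: "?u \<noteq> 0" using uu_nz[OF k] by (simp add: uu_def[OF k])
  have snz: "1 + x1 powi (-k) \<noteq> 0" using ss_nz[OF k] by (simp add: ss_def[OF k])
  have su: "1 + x1 powi (-k) = x1 powi (-k) * ?u" using ss_uu[OF k] by (simp add: ss_def[OF k] uu_def[OF k])
  have uLP: "?u \<in> LaurentPolys" by (intro LP_add LP_1 LP_x1powi)
  have sLP: "1 + x1 powi (-k) \<in> LaurentPolys" by (intro LP_add LP_1 LP_x1powi)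
  have xx: "x1 powi (-k) * x1 powi k = 1" by (simp add: power_int_minus x1_nz)
  have fix_x1: "g x1 = x1" "g (inverse x1) = inverse x1" if "fixes1 g" for g
    using that by (simp_all add: fixes1_def ishom_inverse)
  let ?U = "LaurentPolys \<inter> \<phi> ` LaurentPolys \<inter> \<psi> ` LaurentPolys"
  have genU: "g \<in> ?U" if g: "g \<in> Gens m1 m2" for g
  proof -
    have g1: "x1 \<in> ?U"
      using fix_x1[OF f\<phi>] fix_x1[OF f\<psi>] LP_x1 by (auto intro!: image_eqI[where x=x1])
    have g2: "inverse x1 \<in> ?U"
      using fix_x1[OF f\<phi>] fix_x1[OF f\<psi>] LP_ix1 by (auto intro!: image_eqI[where x="inverse x1"])
    have g3: "x2 * ?u ^ m2 \<in> ?U"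
    proof -
      have "\<phi> (x2 * ?u ^ (m1 + m2)) = x2 * ?u ^ m2"
        using unz by (simp add: ishom_mult[OF h\<phi>] ishom_pow[OF h\<phi>] fixes1_u[OF f\<phi>] \<phi>x2 power_add power_inverse field_simps)
      moreover have "\<psi> (x2 * (x1 powi k) ^ m2) = x2 * ?u ^ m2"
      proof -
        have "\<psi> (x2 * (x1 powi k) ^ m2) = x2 * (x1 powi (-k) * ?u) ^ m2 * (x1 powi k) ^ m2"
          by (simp add: ishom_mult[OF h\<psi>] ishom_pow[OF h\<psi>] fixes1_x1powi[OF f\<psi>] \<psi>x2 su)
        also have "\<dots> = x2 * ?u ^ m2 * (x1 powi (-k) * x1 powi k) ^ m2"
          by (simp only: power_mult_distrib mult_ac)
        finally show ?thesis by (simp add: xx)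
      qed
      moreover have "x2 * ?u ^ (m1 + m2) \<in> LaurentPolys" "x2 * (x1 powi k) ^ m2 \<in> LaurentPolys"
        "x2 * ?u ^ m2 \<in> LaurentPolys"
        using uLP by (auto intro!: LP_mult LP_pow LP_x2 LP_x1powi)
      ultimately show ?thesis by (metis IntI imageI)
    qed
    have g4: "?u ^ m1 / x2 \<in> ?U"
    proof -
      have "\<phi> (inverse x2) = inverse (x2 * inverse ?u ^ m1)"
        by (simp only: ishom_inverse[OF h\<phi>] \<phi>x2)
      also have "\<dots> = ?u ^ m1 / x2" using unz x2_nz by (simp add: power_inverse field_simps)
      finally have "\<phi> (inverse x2) = ?u ^ m1 / x2" .
      moreover have "\<psi> (?u ^ m1 * (1 + x1 powi (-k)) ^ m2 * inverse x2) = ?u ^ m1 / x2"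
      proof -
        have "\<psi> (?u ^ m1 * (1 + x1 powi (-k)) ^ m2 * inverse x2) =
              ?u ^ m1 * (1 + x1 powi (-k)) ^ m2 * inverse (x2 * (1 + x1 powi (-k)) ^ m2)"
          by (simp add: ishom_mult[OF h\<psi>] ishom_pow[OF h\<psi>] ishom_inverse[OF h\<psi>] fixes1_u[OF f\<psi>] \<psi>x2)
        also have "\<dots> = ?u ^ m1 / x2" using snz x2_nz by (simp add: field_simps)
        finally show ?thesis .
      qed
      moreover have "inverse x2 \<in> LaurentPolys" "?u ^ m1 * (1 + x1 powi (-k)) ^ m2 * inverse x2 \<in> LaurentPolys"
        "?u ^ m1 / x2 \<in> LaurentPolys"
        using uLP sLP by (auto simp: divide_inverse intro!: LP_mult LP_pow LP_ix2)
      ultimately show ?thesis by (metis IntI imageI)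
    qed
    show ?thesis using g g1 g2 g3 g4 by blast
  qed
  assume "W \<in> alg_gen (Gens m1 m2)"
  then have "W \<in> ?U"
  proof (induction rule: alg_gen.induct)
    case (const c) then show ?case using img_const[OF f\<phi>] img_const[OF f\<psi>] LP_const by blast
  next
    case (gen g) then show ?case by (rule genU)
  next
    case (add a b) then show ?case using img_add[OF h\<phi>] img_add[OF h\<psi>] LP_add by blast
  next
    case (mult a b) then show ?case using img_mult[OF h\<phi>] img_mult[OF h\<psi>] LP_mult by blast
  qed
  then show ?thesis unfolding \<phi>_def \<psi>_def .
qed

end


theorem proposition3p6:
  fixes k :: int and m1 m2 :: nat
  assumes "k \<noteq> 0"
  shows "upper_bound k (coll2 m1 m2) =
           {W. \<exists>S c. finite S \<and> (\<forall>l\<in>S. c l \<in> LaurentPolys1)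
                 \<and> W = (\<Sum>l\<in>S. c l * x2 powi l)
                 \<and> (\<forall>l\<in>S. l \<le> 0 \<longrightarrow>
                       (\<exists>d\<in>LaurentPolys1. c l = (1 + x1 powi k) ^ nat (- int m1 * l) * d))
                 \<and> (\<forall>l\<in>S. l \<ge> 0 \<longrightarrow>
                       (\<exists>d\<in>LaurentPolys1. c l = (1 + x1 powi k) ^ nat (int m2 * l) * d))}
       \<and> upper_bound k (coll2 m1 m2) =
           alg_gen {x1, inverse x1, x2 * (1 + x1 powi k) ^ m2, (1 + x1 powi k) ^ m1 / x2}"
proof -
  have UB: "upper_bound k (coll2 m1 m2) = LaurentPolys \<inter> (mu k (0,1) ^^ m1) ` LaurentPolys \<inter> (mu k (0,-1) ^^ m2) ` LaurentPolys"
    by (rule UB_eq[OF assms])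
  have s1: "upper_bound k (coll2 m1 m2) \<subseteq> Tset k m1 m2"
    unfolding UB using U_sub_T[OF assms] by blast
  have s2: "Tset k m1 m2 \<subseteq> alg_gen {x1, inverse x1, x2 * (1 + x1 powi k) ^ m2, (1 + x1 powi k) ^ m1 / x2}"
    using T_sub_A[OF assms] by blast
  have s3: "alg_gen {x1, inverse x1, x2 * (1 + x1 powi k) ^ m2, (1 + x1 powi k) ^ m1 / x2} \<subseteq> upper_bound k (coll2 m1 m2)"
    unfolding UB using A_sub_U[OF assms] by blast
  have e1: "upper_bound k (coll2 m1 m2) = Tset k m1 m2" using s1 s2 s3 by blast
  have e2: "upper_bound k (coll2 m1 m2) = alg_gen {x1, inverse x1, x2 * (1 + x1 powi k) ^ m2, (1 + x1 powi k) ^ m1 / x2}"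
    using s1 s2 s3 by blast
  show ?thesis using e1 e2 unfolding Tset_def[OF assms] by blast
qed

end
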